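(* Let $\delta\in(0,1/2)$, $\beta\in(0,1]$, and let $\mu\ge 0$, $\nu\ge 1$ be constants. Let $\mathcal A$ be an online bin packing algorithm such that on every input list $J$: (i) all bins in its packing that contain only small items, except at most $\mu$ of them, have total size at least $1-\delta$; and (ii) the number of bins in its packing containing at least one large item is at most $\nu|J_\ell|$ (where $J_\ell$ is the set of large items of $J$). Let $I$ be a list of $n$ items drawn independently from a common distribution on $(0,1]$ and let $J$ be the prefix of $I$ of length $\beta n$. Then, with probability tending to $1$ as $\mathbb E[\mathrm{Opt}(I)]\to\infty$, $$\mathcal A(J)\le \frac{2\beta\nu}{\delta(1-\delta)}\,\mathbb E[\mathrm{Opt}(I)]+o\big(\mathbb E[\mathrm{Opt}(I)]\big).$$
   Context: $\mathrm{Opt}(L)$ is the minimum number of unit-capacity bins needed to pack list $L$ and $\mathcal A(L)$ the number of bins used by $\mathcal A$. An item is large if its size is at least $\delta$ and small otherwise. *)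

theory Defs
  imports "HOL-Probability.Probability"
begin

text \<open>A deterministic online bin packing algorithm is modelled as a function
  that, given the prefix of the input seen so far (ending with the current item),
  returns the label of the bin into which the current (last) item is placed.
  Hence the placement of item i depends only on items 0..i.\<close>

type_synonym online_alg = "real list \<Rightarrow> nat"

definition bin_of :: "online_alg \<Rightarrow> real list \<Rightarrow> nat \<Rightarrow> nat" where
  "bin_of A L i = A (take (Suc i) L)"

definition bin_items :: "online_alg \<Rightarrow> real list \<Rightarrow> nat \<Rightarrow> nat set" where
  "bin_items A L b = {i. i < length L \<and> bin_of A L i = b}"

definition bin_load :: "online_alg \<Rightarrow> real list \<Rightarrow> nat \<Rightarrow> real" where
  "bin_load A L b = (\<Sum>i\<in>bin_items A L b. L ! i)"

definition used_bins :: "online_alg \<Rightarrow> real list \<Rightarrow> nat set" where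
  "used_bins A L = {bin_of A L i | i. i < length L}"

definition num_bins :: "online_alg \<Rightarrow> real list \<Rightarrow> nat" where
  "num_bins A L = card (used_bins A L)"

definition valid_input :: "real list \<Rightarrow> bool" where
  "valid_input L \<longleftrightarrow> set L \<subseteq> {0<..1}"

definition valid_online_alg :: "online_alg \<Rightarrow> bool" where
  "valid_online_alg A \<longleftrightarrow> (\<forall>L. valid_input L \<longrightarrow> (\<forall>b. bin_load A L b \<le> 1))"

definition is_large :: "real \<Rightarrow> real \<Rightarrow> bool" where
  "is_large \<delta> x \<longleftrightarrow> \<delta> \<le> x"

definition small_only_bins :: "real \<Rightarrow> online_alg \<Rightarrow> real list \<Rightarrow> nat set" where
  "small_only_bins \<delta> A L =
     {b \<in> used_bins A L. \<forall>i\<in>bin_items A L b. \<not> is_large \<delta> (L ! i)}"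

definition large_bins :: "real \<Rightarrow> online_alg \<Rightarrow> real list \<Rightarrow> nat set" where
  "large_bins \<delta> A L =
     {b \<in> used_bins A L. \<exists>i\<in>bin_items A L b. is_large \<delta> (L ! i)}"

definition num_large :: "real \<Rightarrow> real list \<Rightarrow> nat" where
  "num_large \<delta> L = length (filter (is_large \<delta>) L)"

definition feasible_packing :: "real list \<Rightarrow> nat \<Rightarrow> (nat \<Rightarrow> nat) \<Rightarrow> bool" where
  "feasible_packing L k f \<longleftrightarrow>
     (\<forall>i<length L. f i < k) \<and> (\<forall>b<k. (\<Sum>i | i < length L \<and> f i = b. L ! i) \<le> 1)"

definition Opt :: "real list \<Rightarrow> nat" where
  "Opt L = (LEAST k. \<exists>f. feasible_packing L k f)"

end

theory Submission
  imports Defs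
begin


lemma sum_nth_conv: "sum_list L = (\<Sum>i<length L. L ! i)"
  by (simp add: sum_list_sum_nth atLeast0LessThan)

lemma opt_ge_sum:
  assumes "valid_input L" shows "sum_list L \<le> real (Opt L)"
proof -
  have v: "\<And>i. i < length L \<Longrightarrow> 0 < L ! i \<and> L ! i \<le> 1"
    using assms unfolding valid_input_def by (auto dest!: nth_mem)
  have "feasible_packing L (length L) (\<lambda>i. i)"
    unfolding feasible_packing_def
  proof (intro conjI allI impI)
    fix b assume b: "b < length L"
    have "{i. i < length L \<and> i = b} = {b}" using b by auto
    then show "(\<Sum>i | i < length L \<and> i = b. L ! i) \<le> 1" using v b by simp
  qed auto
  then have "\<exists>f. feasible_packing L (Opt L) f"
    unfolding Opt_def using LeastI_ex[of "\<lambda>k. \<exists>f. feasible_packing L k f"] by blast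
  then obtain f where f: "feasible_packing L (Opt L) f" by blast
  have "sum_list L = (\<Sum>i\<in>{..<length L}. L ! i)" by (rule sum_nth_conv)
  also have "\<dots> = (\<Sum>b\<in>{..<Opt L}. \<Sum>i | i \<in> {..<length L} \<and> f i = b. L ! i)"
    by (rule sum.group[symmetric]) (use f in \<open>auto simp: feasible_packing_def\<close>)
  also have "\<dots> \<le> (\<Sum>b\<in>{..<Opt L}. 1)"
    by (intro sum_mono) (use f in \<open>auto simp: feasible_packing_def\<close>)
  finally show ?thesis by simp
qed

lemma large_count: "valid_input L \<Longrightarrow> \<delta> * real (num_large \<delta> L) \<le> sum_list L"
proof (induction L)
  case Nil then show ?case by (simp add: num_large_def)
next
  case (Cons x L)
  then have "valid_input L" "0 < x" by (auto simp: valid_input_def)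
  with Cons show ?case by (auto simp: num_large_def is_large_def algebra_simps)
qed

definition gfun :: "real \<Rightarrow> real \<Rightarrow> real \<Rightarrow> real" where
  "gfun \<delta> \<nu> x = (if x \<in> {0<..1} then x / (1 - \<delta>) + (if \<delta> \<le> x then \<nu> else 0) else 0)"

lemma gfun_list: "valid_input L \<Longrightarrow>
   sum_list (map (gfun \<delta> \<nu>) L) = sum_list L / (1 - \<delta>) + \<nu> * real (num_large \<delta> L)"
proof (induction L)
  case Nil then show ?case by (simp add: num_large_def)
next
  case (Cons x L)
  then have "valid_input L" "x \<in> {0<..1}" by (auto simp: valid_input_def)
  with Cons show ?case by (auto simp: num_large_def is_large_def gfun_def add_divide_distrib algebra_simps)
qed

lemma gfun_opt:
  assumes "valid_input L" "0 < \<delta>" "\<delta> < 1" "1 \<le> \<nu>"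
  shows "sum_list (map (gfun \<delta> \<nu>) L) \<le> \<nu> / (\<delta> * (1 - \<delta>)) * real (Opt L)"
proof -
  have s: "sum_list L \<le> real (Opt L)" by (rule opt_ge_sum[OF assms(1)])
  have l: "\<delta> * real (num_large \<delta> L) \<le> real (Opt L)" using large_count[OF assms(1), of \<delta>] s by linarith
  have "real (num_large \<delta> L) \<le> real (Opt L) / \<delta>" using l assms by (simp add: field_simps)
  then have "sum_list L / (1 - \<delta>) + \<nu> * real (num_large \<delta> L) \<le> real (Opt L) / (1-\<delta>) + \<nu> * (real (Opt L) / \<delta>)"
    using s assms by (intro add_mono divide_right_mono mult_left_mono) auto
  also have "\<dots> \<le> \<nu> / (\<delta> * (1 - \<delta>)) * real (Opt L)"
  proof -
    have "real (Opt L) / (1-\<delta>) + \<nu> * (real (Opt L) / \<delta>) = real (Opt L) * (\<delta> + \<nu> * (1 - \<delta>)) / (\<delta> * (1-\<delta>))"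
      using assms by (simp add: field_simps)
    also have "\<dots> \<le> real (Opt L) * \<nu> / (\<delta> * (1-\<delta>))"
    proof -
      have "\<delta> * 1 \<le> \<delta> * \<nu>" using assms by (intro mult_left_mono) auto
      then have "\<delta> + \<nu> * (1 - \<delta>) \<le> \<nu>" by (simp add: algebra_simps)
      then show ?thesis using assms by (intro divide_right_mono mult_left_mono) auto
    qed
    finally show ?thesis by (simp add: ac_simps)
  qed
  finally show ?thesis using gfun_list[OF assms(1)] by simp
qed

lemma alg_bound:
  assumes "valid_input L" "0 < \<delta>" "\<delta> < 1"
    and ci: "real (card {b \<in> small_only_bins \<delta> A L. bin_load A L b < 1 - \<delta>}) \<le> \<mu>"
    and cii: "real (card (large_bins \<delta> A L)) \<le> \<nu> * real (num_large \<delta> L)"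
  shows "real (num_bins A L) \<le> \<mu> + sum_list (map (gfun \<delta> \<nu>) L)"
proof -
  have v: "\<And>i. i < length L \<Longrightarrow> 0 < L ! i"
    using assms unfolding valid_input_def by (auto dest!: nth_mem)
  have fin: "finite (used_bins A L)"
    unfolding used_bins_def by simp
  let ?S1 = "{b \<in> small_only_bins \<delta> A L. bin_load A L b < 1 - \<delta>}"
  let ?S2 = "{b \<in> small_only_bins \<delta> A L. \<not> bin_load A L b < 1 - \<delta>}"
  have U: "used_bins A L = ?S1 \<union> ?S2 \<union> large_bins \<delta> A L"
    unfolding small_only_bins_def large_bins_def by auto
  have f1: "finite ?S1" "finite ?S2" "finite (large_bins \<delta> A L)"
    using fin unfolding small_only_bins_def large_bins_def by auto
  have "card (used_bins A L) \<le> card ?S1 + card ?S2 + card (large_bins \<delta> A L)"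
    unfolding U by (metis (no_types, lifting) card_Un_le add_le_mono le_trans order_refl)
  then have c: "real (num_bins A L) \<le> real (card ?S1) + real (card ?S2) + real (card (large_bins \<delta> A L))"
    unfolding num_bins_def by linarith
  have load_nn: "\<And>b. 0 \<le> bin_load A L b"
    unfolding bin_load_def bin_items_def using v by (intro sum_nonneg) (simp add: less_imp_le)
  have tot: "(\<Sum>b\<in>used_bins A L. bin_load A L b) = sum_list L"
  proof -
    have "(\<Sum>b\<in>used_bins A L. \<Sum>i | i \<in> {..<length L} \<and> bin_of A L i = b. L ! i) = (\<Sum>i\<in>{..<length L}. L ! i)"
      by (rule sum.group) (auto simp: used_bins_def)
    then show ?thesis unfolding bin_load_def bin_items_def sum_nth_conv by simp
  qed
  have "real (card ?S2) * (1 - \<delta>) = (\<Sum>b\<in>?S2. 1 - \<delta>)" by simp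
  also have "\<dots> \<le> (\<Sum>b\<in>?S2. bin_load A L b)" by (intro sum_mono) auto
  also have "\<dots> \<le> (\<Sum>b\<in>used_bins A L. bin_load A L b)"
    by (intro sum_mono2 fin load_nn) (auto simp: small_only_bins_def)
  finally have "real (card ?S2) \<le> sum_list L / (1 - \<delta>)"
    using tot assms by (simp add: field_simps)
  then show ?thesis using c ci cii gfun_list[OF assms(1), of \<delta> \<nu>] by linarith
qed



lemma int_comp1:
  fixes h :: "'a \<Rightarrow> real"
  assumes "prob_space M" "finite I" "i \<in> I" "integrable M h"
  shows "(\<integral>\<omega>. h (\<omega> i) \<partial>PiM I (\<lambda>_. M)) = integral\<^sup>L M h"
proof -
  interpret prob_space M by fact
  interpret product_sigma_finite "\<lambda>_. M"
    by unfold_locales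
  have "(\<integral>\<omega>. (\<Prod>k\<in>I. (if k = i then h else (\<lambda>_. 1)) (\<omega> k)) \<partial>PiM I (\<lambda>_. M))
        = (\<Prod>k\<in>I. integral\<^sup>L M (if k = i then h else (\<lambda>_. 1)))"
    by (rule product_integral_prod) (use assms in auto)
  moreover have "\<And>\<omega>. (\<Prod>k\<in>I. (if k = i then h else (\<lambda>_. 1)) (\<omega> k)) = h (\<omega> i)"
    using assms by (simp add: if_distrib[where f="\<lambda>f. f _"] cong: if_cong)
  moreover have "(\<Prod>k\<in>I. integral\<^sup>L M (if k = i then h else (\<lambda>_. 1))) = integral\<^sup>L M h"
    using assms by (simp add: if_distrib[where f="\<lambda>f. integral\<^sup>L M f"] prob_space cong: if_cong)
  ultimately show ?thesis by simp
qed

lemma int_comp2: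
  fixes h k :: "'a \<Rightarrow> real"
  assumes "prob_space M" "finite I" "i \<in> I" "j \<in> I" "i \<noteq> j" "integrable M h" "integrable M k"
  shows "(\<integral>\<omega>. h (\<omega> i) * k (\<omega> j) \<partial>PiM I (\<lambda>_. M)) = integral\<^sup>L M h * integral\<^sup>L M k"
proof -
  interpret prob_space M by fact
  interpret product_sigma_finite "\<lambda>_. M"
    by unfold_locales
  define F where "F l = (if l = i then h else if l = j then k else (\<lambda>_. 1))" for l
  have "(\<integral>\<omega>. (\<Prod>l\<in>I. F l (\<omega> l)) \<partial>PiM I (\<lambda>_. M)) = (\<Prod>l\<in>I. integral\<^sup>L M (F l))"
    by (rule product_integral_prod) (use assms in \<open>auto simp: F_def\<close>)
  moreover have "\<And>\<omega>. (\<Prod>l\<in>I. F l (\<omega> l)) = h (\<omega> i) * k (\<omega> j)"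
  proof -
    fix \<omega>
    have "(\<Prod>l\<in>I. F l (\<omega> l)) = F i (\<omega> i) * (\<Prod>l\<in>I-{i}. F l (\<omega> l))"
      using assms by (simp add: prod.remove)
    also have "(\<Prod>l\<in>I-{i}. F l (\<omega> l)) = F j (\<omega> j) * (\<Prod>l\<in>I-{i}-{j}. F l (\<omega> l))"
      using assms by (intro prod.remove) auto
    also have "(\<Prod>l\<in>I-{i}-{j}. F l (\<omega> l)) = 1"
      by (rule prod.neutral) (auto simp: F_def)
    finally show "(\<Prod>l\<in>I. F l (\<omega> l)) = h (\<omega> i) * k (\<omega> j)" using assms by (simp add: F_def)
  qed
  moreover have "(\<Prod>l\<in>I. integral\<^sup>L M (F l)) = integral\<^sup>L M h * integral\<^sup>L M k"
  proof -
    have "(\<Prod>l\<in>I. integral\<^sup>L M (F l)) = integral\<^sup>L M (F i) * (\<Prod>l\<in>I-{i}. integral\<^sup>L M (F l))"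
      using assms by (simp add: prod.remove)
    also have "(\<Prod>l\<in>I-{i}. integral\<^sup>L M (F l)) = integral\<^sup>L M (F j) * (\<Prod>l\<in>I-{i}-{j}. integral\<^sup>L M (F l))"
      using assms by (intro prod.remove) auto
    also have "(\<Prod>l\<in>I-{i}-{j}. integral\<^sup>L M (F l)) = 1"
      by (rule prod.neutral) (auto simp: F_def prob_space)
    finally show ?thesis using assms by (simp add: F_def)
  qed
  ultimately show ?thesis by simp
qed



lemma abs_prod_le: "\<bar>x\<bar> \<le> (b::real) \<Longrightarrow> \<bar>y\<bar> \<le> b \<Longrightarrow> \<bar>x*y\<bar> \<le> b*b"
  unfolding abs_mult by (rule mult_mono) auto

lemma main_fixed:
  fixes \<delta> \<beta> \<mu> \<nu> \<epsilon> E :: real and A :: online_alg and M :: "real measure" and n :: nat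
  assumes "0 < \<delta>" "\<delta> < 1/2" "0 < \<beta>" "\<beta> \<le> 1" "0 \<le> \<mu>" "1 \<le> \<nu>"
    and cond_i: "\<And>L. valid_input L \<Longrightarrow>
           real (card {b \<in> small_only_bins \<delta> A L. bin_load A L b < 1 - \<delta>}) \<le> \<mu>"
    and cond_ii: "\<And>L. valid_input L \<Longrightarrow>
           real (card (large_bins \<delta> A L)) \<le> \<nu> * real (num_large \<delta> L)"
    and M: "prob_space M" and sM: "sets M = sets borel" and M1: "measure M {0<..1} = 1"
    and eps: "0 < \<epsilon>"
    and E_def: "E = (\<integral>\<omega>. real (Opt (map \<omega> [0..<n])) \<partial>(PiM {..<n} (\<lambda>_. M)))"
    and EK: "E \<ge> 4 * (1 / (1 - \<delta>) + \<nu>) * (\<nu> / (\<delta> * (1 - \<delta>))) / \<epsilon>^3 + 2 * \<mu> / \<epsilon> + 1"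
  shows "\<exists>S \<in> sets (PiM {..<n} (\<lambda>_. M)).
              measure (PiM {..<n} (\<lambda>_. M)) S \<ge> 1 - \<epsilon> \<and>
              (\<forall>\<omega>\<in>S. real (num_bins A (map \<omega> [0..<nat \<lfloor>\<beta> * real n\<rfloor>]))
                 \<le> (2 * \<beta> * \<nu> / (\<delta> * (1 - \<delta>)) + \<epsilon>) * E)"
proof -
  define c where "c = \<nu> / (\<delta> * (1 - \<delta>))"
  define B where "B = 1 / (1 - \<delta>) + \<nu>"
  define Q where "Q = PiM {..<n} (\<lambda>_. M)"
  define m where "m = nat \<lfloor>\<beta> * real n\<rfloor>"
  define g where "g = gfun \<delta> \<nu>"
  interpret M: prob_space M by fact
  interpret Q: prob_space Q unfolding Q_def by (rule prob_space_PiM) (rule M)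
  have d1: "0 < 1 - \<delta>" using assms by simp
  have c0: "0 < c" using assms d1 by (auto simp: c_def)
  have B0: "0 < B" unfolding B_def using assms d1 by (intro add_pos_nonneg) auto
  have mb: "real m \<le> \<beta> * real n" unfolding m_def using assms by simp
  have mn: "m \<le> n"
  proof -
    have "\<beta> * real n \<le> real n" using assms by (simp add: mult_left_le_one_le)
    then show ?thesis using mb by linarith
  qed
  have gb: "g \<in> borel_measurable borel" unfolding g_def gfun_def by measurable
  have gm[measurable]: "g \<in> borel_measurable M"
    using gb measurable_cong_sets[OF sM refl] by blast
  have g0: "\<And>x. 0 \<le> g x" using assms by (auto simp: g_def gfun_def)
  have gB: "g x \<le> B" for x
  proof -
    have "x \<in> {0<..1} \<Longrightarrow> x/(1-\<delta>) \<le> 1/(1-\<delta>)" using d1 by (simp add: divide_right_mono)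
    then show ?thesis unfolding g_def gfun_def using B0 assms unfolding B_def by auto
  qed
  have gint: "integrable M g"
    by (rule M.integrable_const_bound[where B=B]) (use g0 gB in auto)
  have g2int: "integrable M (\<lambda>x. (g x)^2)"
    by (rule M.integrable_const_bound[where B="B^2"]) (use g0 gB in \<open>auto intro!: power_mono\<close>)
  define a where "a = integral\<^sup>L M g"
  have a0: "0 \<le> a" unfolding a_def using g0 by auto
  have compm[measurable]: "\<And>i. i < n \<Longrightarrow> (\<lambda>\<omega>. g (\<omega> i)) \<in> borel_measurable Q"
    unfolding Q_def by measurable
  have compint: "\<And>i. i < n \<Longrightarrow> integrable Q (\<lambda>\<omega>. g (\<omega> i))"
    by (rule Q.integrable_const_bound[where B=B]) (use g0 gB in auto)
  have compE: "\<And>i. i < n \<Longrightarrow> (\<integral>\<omega>. g (\<omega> i) \<partial>Q) = a"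
    unfolding Q_def a_def by (rule int_comp1) (use M gint in auto)
  have AEv: "AE \<omega> in Q. \<forall>i\<in>{..<n}. \<omega> i \<in> {0<..1}"
  proof (rule AE_finite_allI)
    fix i assume i: "i \<in> {..<n}"
    have ev: "{0<..1} \<in> M.events" using sM by simp
    have "AE x in M. x \<in> {0<..1}" using M1 M.AE_in_set_eq_1[OF ev] by simp
    then show "AE \<omega> in Q. \<omega> i \<in> {0<..1}"
    proof -
      have "AE \<omega> in PiM {..<n} (\<lambda>_. M). \<omega> i \<in> {0<..1}"
        using AE_PiM_component[of "{..<n}" "\<lambda>_. M" i "\<lambda>x. x \<in> {0<..1}"] i M \<open>AE x in M. x \<in> {0<..1}\<close>
        by simp
      then show ?thesis unfolding Q_def .
    qed
  qed simp
  have valid: "\<And>\<omega> k. \<forall>i\<in>{..<n}. \<omega> i \<in> {0<..1} \<Longrightarrow> k \<le> n \<Longrightarrow> valid_input (map \<omega> [0..<k])"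
    unfolding valid_input_def by auto
  have sum_conv: "\<And>\<omega> k. sum_list (map g (map \<omega> [0..<k])) = (\<Sum>i<k. g (\<omega> i))"
    by (simp add: interv_sum_list_conv_sum_set_nat atLeast0LessThan)
  have t1: "0 \<le> 4 * B * c / \<epsilon>^3" using B0 c0 eps by simp
  have t2: "0 \<le> 2 * \<mu> / \<epsilon>" using assms(5) eps by simp
  have EK': "4 * B * c / \<epsilon>^3 + 2 * \<mu> / \<epsilon> + 1 \<le> E" using EK unfolding B_def c_def by simp
  have Eb1: "4 * B * c / \<epsilon>^3 \<le> E" using EK' t2 by linarith
  have Eb2: "2 * \<mu> / \<epsilon> \<le> E" using EK' t1 by linarith
  have Epos: "0 < E" using EK' t1 t2 by linarith
  have optint: "integrable Q (\<lambda>\<omega>. real (Opt (map \<omega> [0..<n])))"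
  proof (rule ccontr)
    assume "\<not> ?thesis"
    then have "E = 0" unfolding E_def Q_def by (simp add: not_integrable_integral_eq)
    with Epos show False by simp
  qed
  have na: "real n * a \<le> c * E"
  proof -
    have "real n * a = (\<integral>\<omega>. (\<Sum>i<n. g (\<omega> i)) \<partial>Q)"
      using compE compint by (simp add: Bochner_Integration.integral_sum)
    also have "\<dots> \<le> (\<integral>\<omega>. c * real (Opt (map \<omega> [0..<n])) \<partial>Q)"
    proof (rule integral_mono_AE)
      show "integrable Q (\<lambda>\<omega>. \<Sum>i<n. g (\<omega> i))" using compint by auto
      show "integrable Q (\<lambda>\<omega>. c * real (Opt (map \<omega> [0..<n])))" using optint by auto
      show "AE \<omega> in Q. (\<Sum>i<n. g (\<omega> i)) \<le> c * real (Opt (map \<omega> [0..<n]))"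
        using AEv
      proof eventually_elim
        case (elim \<omega>)
        have "sum_list (map g (map \<omega> [0..<n])) \<le> c * real (Opt (map \<omega> [0..<n]))"
          unfolding g_def c_def using assms by (intro gfun_opt valid[OF elim]) auto
        then show ?case using sum_conv by simp
      qed
    qed
    also have "\<dots> = c * E" unfolding E_def Q_def by simp
    finally show ?thesis .
  qed
  have ma: "real m * a \<le> \<beta> * (c * E)"
  proof -
    have "real m * a \<le> (\<beta> * real n) * a" using mb a0 by (rule mult_right_mono)
    also have "\<dots> \<le> \<beta> * (c * E)" using na assms by (simp add: mult.assoc mult_left_mono)
    finally show ?thesis .
  qed
  define X where "X \<omega> = (\<Sum>i<m. g (\<omega> i))" for \<omega>
  have Xm[measurable]: "X \<in> borel_measurable Q"
    unfolding X_def using mn by (intro borel_measurable_sum compm) auto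
  have Xint2: "integrable Q (\<lambda>\<omega>. (X \<omega>)^2)"
  proof (rule Q.integrable_const_bound[where B="(real m * B)^2"])
    show "AE \<omega> in Q. norm ((X \<omega>)^2) \<le> (real m * B)^2"
    proof (rule AE_I2)
      fix \<omega>
      have "0 \<le> X \<omega>" unfolding X_def using g0 by (auto intro: sum_nonneg)
      moreover have "X \<omega> \<le> real m * B" unfolding X_def using sum_mono[of "{..<m}" "\<lambda>i. g (\<omega> i)" "\<lambda>_. B"] gB by simp
      ultimately show "norm ((X \<omega>)^2) \<le> (real m * B)^2" by (simp add: power_mono)
    qed
  qed simp
  have EX: "Q.expectation X = real m * a"
    unfolding X_def using compE compint mn by (simp add: Bochner_Integration.integral_sum)
  have var: "Q.variance X \<le> B * c * E"
  proof -
    have "a \<le> (\<integral>x. B \<partial>M)" unfolding a_def by (rule integral_mono) (use gint gB in auto)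
    then have aB: "a \<le> B" by (simp add: M.prob_space)
    have hb: "\<bar>g x - a\<bar> \<le> B" for x using g0[of x] gB[of x] a0 aB by linarith
    define V where "V = (\<integral>x. (g x - a) * (g x - a) \<partial>M)"
    have hint: "integrable M (\<lambda>x. g x - a)" using gint by auto
    have hhint: "integrable M (\<lambda>x. (g x - a) * (g x - a))"
    proof -
      have nb: "norm ((g x - a) * (g x - a)) \<le> B * B" for x
        by (simp only: real_norm_def) (rule abs_prod_le[OF hb hb])
      show ?thesis by (rule M.integrable_const_bound[where B="B*B", OF AE_I2[OF nb]]) measurable
    qed
    have h0: "(\<integral>x. g x - a \<partial>M) = 0" using gint unfolding a_def by (simp add: M.prob_space)
    have pint: "integrable Q (\<lambda>\<omega>. (g (\<omega> i) - a) * (g (\<omega> j) - a))" if "i < n" "j < n" for i j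
    proof -
      have nb: "norm ((g (\<omega> i) - a) * (g (\<omega> j) - a)) \<le> B * B" for \<omega>
        by (simp only: real_norm_def) (rule abs_prod_le[OF hb hb])
      show ?thesis by (rule Q.integrable_const_bound[where B="B*B", OF AE_I2[OF nb]]) (use that in measurable)
    qed
    have pE: "(\<integral>\<omega>. (g (\<omega> i) - a) * (g (\<omega> j) - a) \<partial>Q) = (if i = j then V else 0)"
      if "i < n" "j < n" for i j
    proof (cases "i = j")
      case True
      then show ?thesis unfolding Q_def V_def using int_comp1[OF M _ _ hhint, of "{..<n}" i] that by simp
    next
      case False
      then show ?thesis unfolding Q_def using int_comp2[OF M _ _ _ False hint hint, of "{..<n}"] that h0 by simp
    qed
    have dX: "\<And>\<omega>. X \<omega> - real m * a = (\<Sum>i<m. g (\<omega> i) - a)"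
      by (simp add: X_def sum_subtractf)
    have "Q.variance X = (\<integral>\<omega>. (\<Sum>i<m. \<Sum>j<m. (g (\<omega> i) - a) * (g (\<omega> j) - a)) \<partial>Q)"
      unfolding EX dX by (simp add: power2_eq_square sum_product)
    also have "\<dots> = (\<Sum>i<m. \<Sum>j<m. (\<integral>\<omega>. (g (\<omega> i) - a) * (g (\<omega> j) - a) \<partial>Q))"
    proof -
      have pint': "integrable Q (\<lambda>\<omega>. (g (\<omega> i) - a) * (g (\<omega> j) - a))" if "i < m" "j < m" for i j
        using pint that mn by simp
      have "(\<integral>\<omega>. (\<Sum>i<m. \<Sum>j<m. (g (\<omega> i) - a) * (g (\<omega> j) - a)) \<partial>Q)
          = (\<Sum>i<m. (\<integral>\<omega>. (\<Sum>j<m. (g (\<omega> i) - a) * (g (\<omega> j) - a)) \<partial>Q))"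
        by (rule Bochner_Integration.integral_sum) (auto intro!: Bochner_Integration.integrable_sum pint')
      also have "\<dots> = (\<Sum>i<m. \<Sum>j<m. (\<integral>\<omega>. (g (\<omega> i) - a) * (g (\<omega> j) - a) \<partial>Q))"
        by (intro sum.cong refl Bochner_Integration.integral_sum) (auto intro!: pint')
      finally show ?thesis .
    qed
    also have "\<dots> = (\<Sum>i<m. \<Sum>j<m. (if i = j then V else 0))"
      using pE mn by (intro sum.cong refl) auto
    also have "\<dots> = real m * V" by simp
    finally have v1: "Q.variance X = real m * V" .
    have "V = M.variance g" unfolding V_def a_def by (simp add: power2_eq_square)
    also have "\<dots> = (\<integral>x. (g x)^2 \<partial>M) - a^2" unfolding a_def by (rule M.variance_eq[OF gint g2int])
    also have "\<dots> \<le> (\<integral>x. B * g x \<partial>M)"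
    proof -
      have "(\<integral>x. (g x)^2 \<partial>M) \<le> (\<integral>x. B * g x \<partial>M)"
        by (rule integral_mono[OF g2int]) (use gint g0 gB in \<open>auto simp: power2_eq_square intro!: mult_right_mono\<close>)
      moreover have "0 \<le> a^2" by simp
      ultimately show ?thesis by linarith
    qed
    also have "\<dots> = B * a" unfolding a_def by simp
    finally have "V \<le> B * a" .
    then have "Q.variance X \<le> real m * (B * a)" unfolding v1 by (intro mult_left_mono) auto
    also have "\<dots> = B * (real m * a)" by simp
    also have "\<dots> \<le> B * (\<beta> * (c * E))" using ma B0 by (intro mult_left_mono) auto
    also have "\<dots> \<le> B * (c * E)" using assms B0 c0 Epos by (intro mult_left_mono mult_left_le_one_le) auto
    finally show ?thesis by (simp add: mult.assoc)
  qed
  define s where "s = \<epsilon> * E / 2"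
  have s0: "0 < s" using eps Epos by (simp add: s_def)
  have cheb: "Q.prob {\<omega>\<in>space Q. \<bar>X \<omega> - real m * a\<bar> \<ge> s} \<le> Q.variance X / s^2"
    using Q.Chebyshev_inequality[OF Xm Xint2 s0] EX by simp
  have pbound: "Q.variance X / s^2 \<le> \<epsilon>"
  proof -
    have "4 * B * c / \<epsilon>^3 \<le> E" by (rule Eb1)
    then have E3: "4 * B * c \<le> \<epsilon>^3 * E" using eps by (simp add: field_simps)
    have "Q.variance X / s^2 \<le> B * c * E / s^2" using var by (simp add: divide_right_mono)
    also have "\<dots> = 4 * B * c / (\<epsilon>^2 * E)" unfolding s_def using Epos eps by (simp add: field_simps power2_eq_square)
    also have "\<dots> \<le> \<epsilon>" using E3 Epos eps by (simp add: field_simps power3_eq_cube power2_eq_square)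
    finally show ?thesis .
  qed
  define S where "S = {\<omega>\<in>space Q. \<bar>X \<omega> - real m * a\<bar> < s \<and> (\<forall>i\<in>{..<n}. \<omega> i \<in> {0<..1})}"
  have compQ[measurable]: "(\<lambda>\<omega>. \<omega> i) \<in> borel_measurable Q" if "i \<in> {..<n}" for i
  proof -
    have "(\<lambda>\<omega>. \<omega> i) \<in> Q \<rightarrow>\<^sub>M M" unfolding Q_def using that by (rule measurable_component_singleton)
    then show ?thesis using measurable_cong_sets[OF refl sM] by blast
  qed
  have Sm: "S \<in> sets Q" unfolding S_def by measurable
  have "Q.prob S = Q.prob {\<omega>\<in>space Q. \<bar>X \<omega> - real m * a\<bar> < s}"
    unfolding S_def by (rule Q.prob_eq_AE) (use AEv in auto)
  also have "{\<omega>\<in>space Q. \<bar>X \<omega> - real m * a\<bar> < s} = space Q - {\<omega>\<in>space Q. \<bar>X \<omega> - real m * a\<bar> \<ge> s}"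
    by auto
  also have "Q.prob \<dots> = 1 - Q.prob {\<omega>\<in>space Q. \<bar>X \<omega> - real m * a\<bar> \<ge> s}"
    by (rule Q.prob_compl) measurable
  finally have PS: "Q.prob S \<ge> 1 - \<epsilon>" using cheb pbound by linarith
  have bound: "real (num_bins A (map \<omega> [0..<m])) \<le> (2 * \<beta> * \<nu> / (\<delta> * (1 - \<delta>)) + \<epsilon>) * E"
    if w: "\<omega> \<in> S" for \<omega>
  proof -
    have v: "valid_input (map \<omega> [0..<m])" using w mn unfolding S_def by (intro valid) auto
    have "real (num_bins A (map \<omega> [0..<m])) \<le> \<mu> + X \<omega>"
      using alg_bound[OF v _ _ cond_i[OF v] cond_ii[OF v]] assms sum_conv
      unfolding X_def g_def by simp
    also have "\<dots> \<le> \<mu> + real m * a + s" using w unfolding S_def by auto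
    also have "\<dots> \<le> (2 * \<beta> * \<nu> / (\<delta> * (1 - \<delta>)) + \<epsilon>) * E"
    proof -
      have "2 * \<mu> / \<epsilon> \<le> E" by (rule Eb2)
      then have mu: "\<mu> \<le> \<epsilon> * E / 2" using eps by (simp add: field_simps)
      have "0 \<le> \<beta> * (c * E)" using assms c0 Epos by simp
      then show ?thesis using ma mu unfolding s_def c_def by (simp add: algebra_simps)
    qed
    finally show ?thesis .
  qed
  show ?thesis
    using Sm PS bound unfolding Q_def m_def by blast
qed

theorem lemmaC1:
  fixes \<delta> \<beta> \<mu> \<nu> :: real and A :: online_alg
  assumes "0 < \<delta>" "\<delta> < 1/2" "0 < \<beta>" "\<beta> \<le> 1" "0 \<le> \<mu>" "1 \<le> \<nu>"
    and "valid_online_alg A"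
    and cond_i: "\<And>L. valid_input L \<Longrightarrow>
           real (card {b \<in> small_only_bins \<delta> A L. bin_load A L b < 1 - \<delta>}) \<le> \<mu>"
    and cond_ii: "\<And>L. valid_input L \<Longrightarrow>
           real (card (large_bins \<delta> A L)) \<le> \<nu> * real (num_large \<delta> L)"
  shows "\<forall>\<epsilon>>0. \<exists>K. \<forall>(M :: real measure) (n :: nat).
           prob_space M \<and> sets M = sets borel \<and> measure M {0<..1} = 1 \<and>
           (\<integral>\<omega>. real (Opt (map \<omega> [0..<n])) \<partial>(PiM {..<n} (\<lambda>_. M))) \<ge> K \<longrightarrow>
           (\<exists>S \<in> sets (PiM {..<n} (\<lambda>_. M)).
              measure (PiM {..<n} (\<lambda>_. M)) S \<ge> 1 - \<epsilon> \<and>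
              (\<forall>\<omega>\<in>S. real (num_bins A (map \<omega> [0..<nat \<lfloor>\<beta> * real n\<rfloor>]))
                 \<le> (2 * \<beta> * \<nu> / (\<delta> * (1 - \<delta>)) + \<epsilon>) *
                   (\<integral>\<omega>. real (Opt (map \<omega> [0..<n])) \<partial>(PiM {..<n} (\<lambda>_. M)))))"
  proof (intro allI impI)
  fix \<epsilon> :: real assume eps: "\<epsilon> > 0"
  show "\<exists>K. \<forall>(M :: real measure) (n :: nat).
           prob_space M \<and> sets M = sets borel \<and> measure M {0<..1} = 1 \<and>
           (\<integral>\<omega>. real (Opt (map \<omega> [0..<n])) \<partial>(PiM {..<n} (\<lambda>_. M))) \<ge> K \<longrightarrow>
           (\<exists>S \<in> sets (PiM {..<n} (\<lambda>_. M)).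
              measure (PiM {..<n} (\<lambda>_. M)) S \<ge> 1 - \<epsilon> \<and>
              (\<forall>\<omega>\<in>S. real (num_bins A (map \<omega> [0..<nat \<lfloor>\<beta> * real n\<rfloor>]))
                 \<le> (2 * \<beta> * \<nu> / (\<delta> * (1 - \<delta>)) + \<epsilon>) *
                   (\<integral>\<omega>. real (Opt (map \<omega> [0..<n])) \<partial>(PiM {..<n} (\<lambda>_. M)))))"
    apply (rule exI[of _ "4 * (1 / (1 - \<delta>) + \<nu>) * (\<nu> / (\<delta> * (1 - \<delta>))) / \<epsilon>^3 + 2 * \<mu> / \<epsilon> + 1"])
    apply (intro allI impI)
    apply (rule main_fixed[OF assms(1-6) cond_i cond_ii _ _ _ eps refl])
    apply auto
    done
qed

end
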